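(* Let $c\in[1,2)$, $h\in\mathcal{R}_c$, and let $\varphi$ be the compositional inverse of $h$. Let $(X,\mathcal{B},\mu)$ be a probability space and $(f_n)_{n\in\mathbb{N}}$ a sequence of $1$-bounded measurable functions on $X$ such that for some $f\in L^2_\mu(X)$, \[ \lim_{N\to\infty}\Big\|\frac1N\sum_{n=1}^N f_n-f\Big\|_{L^2_\mu(X)}=0. \] Then \[ \limsup_{N\to\infty}\Big\|\frac{1}{|\mathbb{N}_h\cap[N]|}\sum_{n\in\mathbb{N}_h\cap[N]}f_n-f\Big\|_{L^2_\mu(X)}\le\limsup_{N\to\infty}\Big\|\sum_{n\in[N]}\frac{\Phi(-\varphi(n+1))-\Phi(-\varphi(n))}{\lfloor\varphi(N)\rfloor}f_n\Big\|_{L^2_\mu(X)}, \] where $\Phi(x)=\{x\}-1/2$.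
   Context: Class $\mathcal{R}_c$ ($c$-regularly varying functions), for $c\in[1,2)$ and some $x_0\ge1$: the set of $h\in\mathcal{C}^3([x_0,\infty)\to[1,\infty))$ such that (i) $h'>0$ and $h''>0$; (ii) $h(x)=Cx^c\exp\big(\int_{x_0}^x\frac{\vartheta(t)}{t}dt\big)$ for a constant $C>0$ and some $\vartheta\in\mathcal{C}^3([x_0,\infty)\to\mathbb{R})$ with $\vartheta(x)\to0$, $x\vartheta'(x)\to0$, $x^2\vartheta''(x)\to0$, $x^3\vartheta'''(x)\to0$ as $x\to\infty$; (iii) if $c=1$, additionally $\vartheta$ is positive and decreasing, $\vartheta(x)^{-1}\lesssim_\varepsilon x^\varepsilon$ for every $\varepsilon>0$, $\lim_{x\to\infty}x/h(x)=0$, and $x\vartheta'(x)/\vartheta(x)\to0$, $x^2\vartheta''(x)/\vartheta(x)\to0$, $x^3\vartheta'''(x)/\vartheta(x)\to0$ as $x\to\infty$. $h$ is extended arbitrarily to $[1,x_0)$ and $\varphi$ arbitrarily to small arguments; these choices do not affect the statement. Notation: $[N]=\{1,\dots,N\}$, $\mathbb{N}_h=\{\lfloor h(n)\rfloor:n\in\mathbb{N}\}$, $\{x\}=x-\lfloor x\rfloor$. A function is $1$-bounded if it is measurable with absolute value $\le1$. *)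

theory Defs
  imports "HOL-Probability.Probability"
begin

definition C3_on :: "real set \<Rightarrow> (real \<Rightarrow> real) \<Rightarrow> (real \<Rightarrow> real) \<Rightarrow> (real \<Rightarrow> real)
    \<Rightarrow> (real \<Rightarrow> real) \<Rightarrow> bool" where
  "C3_on S f f1 f2 f3 \<longleftrightarrow>
     (\<forall>x\<in>S. (f has_real_derivative f1 x) (at x within S) \<and>
             (f1 has_real_derivative f2 x) (at x within S) \<and>
             (f2 has_real_derivative f3 x) (at x within S)) \<and> continuous_on S f3"

definition regvar :: "real \<Rightarrow> real \<Rightarrow> (real \<Rightarrow> real) \<Rightarrow> bool" where
  "regvar c x0 h \<longleftrightarrow> 1 \<le> c \<and> c < 2 \<and> 1 \<le> x0 \<and>
    (\<exists>h1 h2 h3 C \<theta> \<theta>1 \<theta>2 \<theta>3.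
       C3_on {x0..} h h1 h2 h3 \<and>
       (\<forall>x\<ge>x0. 1 \<le> h x \<and> h1 x > 0 \<and> h2 x > 0) \<and>
       C > 0 \<and> C3_on {x0..} \<theta> \<theta>1 \<theta>2 \<theta>3 \<and>
       (\<forall>x\<ge>x0. h x = C * x powr c * exp (integral {x0..x} (\<lambda>t. \<theta> t / t))) \<and>
       (\<theta> \<longlongrightarrow> 0) at_top \<and>
       ((\<lambda>x. x * \<theta>1 x) \<longlongrightarrow> 0) at_top \<and>
       ((\<lambda>x. x^2 * \<theta>2 x) \<longlongrightarrow> 0) at_top \<and>
       ((\<lambda>x. x^3 * \<theta>3 x) \<longlongrightarrow> 0) at_top \<and>
       (c = 1 \<longrightarrow>
          (\<forall>x\<ge>x0. \<theta> x > 0) \<and>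
          (\<forall>x y. x0 \<le> x \<longrightarrow> x \<le> y \<longrightarrow> \<theta> y \<le> \<theta> x) \<and>
          (\<forall>\<epsilon>>0. \<exists>K. \<forall>x\<ge>x0. 1 / \<theta> x \<le> K * x powr \<epsilon>) \<and>
          ((\<lambda>x. x / h x) \<longlongrightarrow> 0) at_top \<and>
          ((\<lambda>x. x * \<theta>1 x / \<theta> x) \<longlongrightarrow> 0) at_top \<and>
          ((\<lambda>x. x^2 * \<theta>2 x / \<theta> x) \<longlongrightarrow> 0) at_top \<and>
          ((\<lambda>x. x^3 * \<theta>3 x / \<theta> x) \<longlongrightarrow> 0) at_top))"

definition Nh :: "(real \<Rightarrow> real) \<Rightarrow> nat set" where
  "Nh h = {m. \<exists>n::nat. 1 \<le> n \<and> \<lfloor>h (real n)\<rfloor> = int m}"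

definition L2norm :: "'a measure \<Rightarrow> ('a \<Rightarrow> complex) \<Rightarrow> real" where
  "L2norm M g = sqrt (integral\<^sup>L M (\<lambda>x. (cmod (g x))^2))"

definition sawtooth :: "real \<Rightarrow> real" where
  "sawtooth x = frac x - 1/2"

end

theory Submission
  imports Defs
begin


definition sqi :: "'a measure \<Rightarrow> ('a \<Rightarrow> complex) \<Rightarrow> bool" where
  "sqi M u \<longleftrightarrow> u \<in> borel_measurable M \<and> integrable M (\<lambda>x. (cmod (u x))^2)"

lemma sqi_add:
  assumes "sqi M u" "sqi M v" shows "sqi M (\<lambda>x. u x + v x)"
proof -
  have [measurable]: "u \<in> borel_measurable M" "v \<in> borel_measurable M" using assms unfolding sqi_def by auto
  have m: "(\<lambda>x. u x + v x) \<in> borel_measurable M" by measurable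
  have i: "integrable M (\<lambda>x. 2 * (cmod (u x))^2 + 2 * (cmod (v x))^2)"
    using assms by (simp add: sqi_def)
  have "integrable M (\<lambda>x. (cmod (u x + v x))^2)"
  proof (rule Bochner_Integration.integrable_bound[OF i])
    show "(\<lambda>x. (cmod (u x + v x))\<^sup>2) \<in> borel_measurable M" using m by measurable
    show "AE x in M. norm ((cmod (u x + v x))\<^sup>2) \<le> norm (2 * (cmod (u x))\<^sup>2 + 2 * (cmod (v x))\<^sup>2)"
    proof (intro AE_I2)
      fix x
      have t: "cmod (u x + v x) \<le> cmod (u x) + cmod (v x)" by (rule norm_triangle_ineq)
      have "(cmod (u x + v x))^2 \<le> (cmod (u x) + cmod (v x))^2"
        using t by (simp add: power_mono)
      also have "\<dots> \<le> 2 * (cmod (u x))\<^sup>2 + 2 * (cmod (v x))\<^sup>2"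
        by (smt (verit) sum_squares_bound power2_sum)
      finally show "norm ((cmod (u x + v x))\<^sup>2) \<le> norm (2 * (cmod (u x))\<^sup>2 + 2 * (cmod (v x))\<^sup>2)"
        by simp
    qed
  qed
  then show ?thesis using m by (simp add: sqi_def)
qed

lemma sqi_cmult:
  assumes "sqi M u" shows "sqi M (\<lambda>x. c * u x)"
proof -
  have "integrable M (\<lambda>x. (cmod c)^2 * (cmod (u x))^2)" using assms by (simp add: sqi_def)
  moreover have [measurable]: "u \<in> borel_measurable M" using assms unfolding sqi_def by auto
  moreover have "(\<lambda>x. c * u x) \<in> borel_measurable M" by measurable
  ultimately show ?thesis using assms by (simp add: sqi_def norm_mult power_mult_distrib)
qed

lemma sqi_bdd:
  assumes "finite_measure M" "u \<in> borel_measurable M" "\<forall>x\<in>space M. cmod (u x) \<le> B"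
  shows "sqi M u"
proof -
  have "integrable M (\<lambda>x. (cmod (u x))^2)"
  proof (rule finite_measure.integrable_const_bound[OF assms(1)])
    show "AE x in M. norm ((cmod (u x))\<^sup>2) \<le> B^2"
      using assms(3) by (intro AE_I2) (auto intro!: power_mono)
    show "(\<lambda>x. (cmod (u x))\<^sup>2) \<in> borel_measurable M" using assms(2) by measurable
  qed
  then show ?thesis using assms by (simp add: sqi_def)
qed

lemma sqi_sum:
  assumes "finite I" "\<forall>i\<in>I. sqi M (u i)" shows "sqi M (\<lambda>x. \<Sum>i\<in>I. u i x)"
  using assms
proof (induction I rule: finite_induct)
  case empty then show ?case by (simp add: sqi_def)
next
  case (insert a F)
  then show ?case by (simp add: sqi_add)
qed

lemma L2norm_nonneg: "L2norm M u \<ge> 0"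
  unfolding L2norm_def by (auto intro!: integral_nonneg_AE)

lemma L2norm_cong: "(\<And>x. x \<in> space M \<Longrightarrow> u x = v x) \<Longrightarrow> L2norm M u = L2norm M v"
  unfolding L2norm_def by (metis (mono_tags, lifting) Bochner_Integration.integral_cong)

lemma L2norm_cmult: "L2norm M (\<lambda>x. c * u x) = cmod c * L2norm M u"
proof -
  have "integral\<^sup>L M (\<lambda>x. (cmod (c * u x))^2) = (cmod c)^2 * integral\<^sup>L M (\<lambda>x. (cmod (u x))^2)"
    by (simp add: norm_mult power_mult_distrib)
  then show ?thesis unfolding L2norm_def by (simp add: real_sqrt_mult)
qed

lemma L2norm_bdd:
  assumes "prob_space M" "u \<in> borel_measurable M" "\<forall>x\<in>space M. cmod (u x) \<le> B"
  shows "L2norm M u \<le> B"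
proof -
  interpret prob_space M by fact
  have B: "B \<ge> 0" using assms(3) norm_ge_zero order_trans
    by (metis ex_in_conv not_empty)
  have "integral\<^sup>L M (\<lambda>x. (cmod (u x))^2) \<le> integral\<^sup>L M (\<lambda>x. B^2)"
    by (rule integral_mono') (use assms(3) in \<open>auto intro!: power_mono\<close>)
  also have "\<dots> = B^2" by (simp add: prob_space)
  finally show ?thesis unfolding L2norm_def using B
    by (metis real_sqrt_abs real_sqrt_le_mono abs_of_nonneg)
qed

lemma L2_triangle:
  assumes "sqi M u" "sqi M v"
  shows "L2norm M (\<lambda>x. u x + v x) \<le> L2norm M u + L2norm M v"
proof -
  define A where "A = integral\<^sup>L M (\<lambda>x. (cmod (u x))^2)"
  define B where "B = integral\<^sup>L M (\<lambda>x. (cmod (v x))^2)"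
  define X where "X = integral\<^sup>L M (\<lambda>x. (cmod (u x + v x))^2)"
  have A0: "A \<ge> 0" and B0: "B \<ge> 0" unfolding A_def B_def by (auto intro!: integral_nonneg_AE)
  have key: "X \<le> (1 + t) * A + (1 + 1/t) * B" if t: "t > 0" for t
  proof -
    have pw: "(cmod (u x + v x))^2 \<le> (1 + t) * (cmod (u x))^2 + (1 + 1/t) * (cmod (v x))^2" for x
    proof -
      define a where "a = cmod (u x)"
      define b where "b = cmod (v x)"
      have "cmod (u x + v x) \<le> a + b" unfolding a_def b_def by (rule norm_triangle_ineq)
      then have "(cmod (u x + v x))^2 \<le> (a + b)^2" by (simp add: power_mono)
      also have "\<dots> \<le> (1 + t) * a^2 + (1 + 1/t) * b^2"
      proof -
        have "0 \<le> (t * a - b)^2 / t" using t by simp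
        also have "(t * a - b)^2 / t = t * a^2 - 2 * a * b + b^2 / t"
          using t by (simp add: field_simps power2_eq_square)
        finally show ?thesis by (simp add: power2_eq_square field_simps)
      qed
      finally show ?thesis unfolding a_def b_def .
    qed
    have "X \<le> integral\<^sup>L M (\<lambda>x. (1 + t) * (cmod (u x))^2 + (1 + 1/t) * (cmod (v x))^2)"
      unfolding X_def
    proof (rule integral_mono')
      show "integrable M (\<lambda>x. (1 + t) * (cmod (u x))\<^sup>2 + (1 + 1 / t) * (cmod (v x))\<^sup>2)"
        using assms by (simp add: sqi_def)
      show "0 \<le> (1 + t) * (cmod (u x))\<^sup>2 + (1 + 1 / t) * (cmod (v x))\<^sup>2" for x
        using t by (simp add: add_nonneg_nonneg)
    qed (rule pw)
    also have "\<dots> = (1 + t) * A + (1 + 1/t) * B"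
      using assms unfolding A_def B_def sqi_def by simp
    finally show ?thesis .
  qed
  have "X \<le> (sqrt A + sqrt B)^2"
  proof (cases "A > 0 \<and> B > 0")
    case True
    define t where "t = sqrt B / sqrt A"
    have t: "t > 0" using True by (simp add: t_def)
    have "(1 + t) * A + (1 + 1/t) * B = (sqrt A + sqrt B)^2"
      using True unfolding t_def
      by (simp add: field_simps power2_eq_square)
    then show ?thesis using key[OF t] by simp
  next
    case False
    then have "A = 0 \<or> B = 0" using A0 B0 by auto
    then show ?thesis
    proof
      assume a: "A = 0"
      have "X \<le> B + e" if "e > 0" for e
      proof (cases "B = 0")
        case True then show ?thesis using key[of 1] a that by simp
      next
        case False
        then have "B > 0" using B0 by simp
        then have "B * X \<le> B * (B + e)" using key[of "B/e"] a that by (simp add: field_simps)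
        then show ?thesis using \<open>B > 0\<close> by simp
      qed
      then have "X \<le> B" by (rule field_le_epsilon)
      then show ?thesis using a B0 by simp
    next
      assume b: "B = 0"
      have "X \<le> A + e" if "e > 0" for e
      proof (cases "A = 0")
        case True then show ?thesis using key[of 1] b that by simp
      next
        case False
        then have "A > 0" using A0 by simp
        then have "A * X \<le> A * (A + e)" using key[of "e/A"] b that by (simp add: field_simps)
        then show ?thesis using \<open>A > 0\<close> by simp
      qed
      then have "X \<le> A" by (rule field_le_epsilon)
      then show ?thesis using b A0 by simp
    qed
  qed
  then have "sqrt X \<le> sqrt A + sqrt B"
    by (metis A0 B0 add_nonneg_nonneg real_sqrt_ge_zero real_sqrt_le_mono real_sqrt_unique)
  then show ?thesis unfolding L2norm_def A_def B_def X_def .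
qed

lemma L2_sum:
  assumes "finite I" "\<forall>i\<in>I. sqi M (u i)"
  shows "L2norm M (\<lambda>x. \<Sum>i\<in>I. u i x) \<le> (\<Sum>i\<in>I. L2norm M (u i))"
  using assms
proof (induction I rule: finite_induct)
  case empty then show ?case by (simp add: L2norm_def)
next
  case (insert a F)
  note insert
  have "L2norm M (\<lambda>x. \<Sum>i\<in>insert a F. u i x) = L2norm M (\<lambda>x. u a x + (\<Sum>i\<in>F. u i x))"
    using insert by simp
  also have "\<dots> \<le> L2norm M (u a) + L2norm M (\<lambda>x. \<Sum>i\<in>F. u i x)"
    using insert by (intro L2_triangle) (auto intro!: sqi_sum)
  also have "\<dots> \<le> L2norm M (u a) + (\<Sum>i\<in>F. L2norm M (u i))" using insert by simp
  finally show ?case using insert by simp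
qed


lemma abel_identity:
  fixes a :: "nat \<Rightarrow> 'b::comm_ring_1" and v :: "nat \<Rightarrow> 'b"
  shows "(\<Sum>n=1..N. v n * a n) =
    (\<Sum>n=1..N. (v n - v (Suc n)) * (\<Sum>k=1..n. a k)) + v (Suc N) * (\<Sum>k=1..N. a k)"
proof (induction N)
  case 0 then show ?case by simp
next
  case (Suc N)
  show ?case using Suc by (simp add: algebra_simps)
qed

lemma weighted_real:
  fixes v E :: "nat \<Rightarrow> real"
  assumes vdec: "\<forall>n\<ge>1. v (Suc n) \<le> v n" and vnn: "\<forall>n. 0 \<le> v n"
    and Vinf: "filterlim (\<lambda>N. \<Sum>n=1..N. v n) at_top sequentially"
    and E0: "E \<longlonglongrightarrow> 0" and Enn: "\<forall>n. 0 \<le> E n"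
  shows "(\<lambda>N. ((\<Sum>n=1..N. (v n - v (Suc n)) * real n * E n) + v (Suc N) * real N * E N)
            / (\<Sum>n=1..N. v n)) \<longlonglongrightarrow> 0"
proof -
  define V where "V N = (\<Sum>n=1..N. v n)" for N
  define Q where "Q N = (\<Sum>n=1..N. (v n - v (Suc n)) * real n * E n) + v (Suc N) * real N * E N" for N
  have ident: "(\<Sum>n=1..N. (v n - v (Suc n)) * real n) + v (Suc N) * real N = V N" for N
    using abel_identity[of v "\<lambda>_. 1" N] by (simp add: V_def)
  have Qnn: "Q N \<ge> 0" for N
    unfolding Q_def using vdec vnn Enn
    by (intro add_nonneg_nonneg sum_nonneg mult_nonneg_nonneg) auto
  show ?thesis
    unfolding Q_def[symmetric] V_def[symmetric]
  proof (rule LIMSEQ_I)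
    fix r :: real assume r: "r > 0"
    define e where "e = r / 3"
    have e: "e > 0" using r by (simp add: e_def)
    obtain K where K: "\<forall>n\<ge>K. norm (E n - 0) < e" using LIMSEQ_D[OF E0 e] by blast
    define C where "C = (\<Sum>n=1..K. (v n - v (Suc n)) * real n * E n)"
    have Vev: "eventually (\<lambda>N. V N \<ge> max 1 (C / e)) sequentially"
      using Vinf unfolding V_def filterlim_at_top by blast
    then obtain N0 where N0: "\<forall>N\<ge>N0. V N \<ge> max 1 (C / e)" by (auto simp: eventually_sequentially)
    show "\<exists>no. \<forall>N\<ge>no. norm (Q N / V N - 0) < r"
    proof (intro exI allI impI)
      fix N assume N: "N \<ge> max N0 K"
      have VN: "V N \<ge> 1" "V N \<ge> C / e" using N0 N by auto
      have "Q N \<le> C + e * V N"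
      proof -
        have t1: "(\<Sum>n=1..N. (v n - v (Suc n)) * real n * E n)
              \<le> (\<Sum>n=1..N. (v n - v (Suc n)) * real n * (e + (if n \<le> K then E n else 0)))"
        proof (rule sum_mono)
          fix n assume n: "n \<in> {1..N}"
          have "E n \<le> e + (if n \<le> K then E n else 0)" using K e by (auto simp: not_le abs_less_iff intro: less_imp_le)
          moreover have "(v n - v (Suc n)) * real n \<ge> 0" using vdec n by auto
          ultimately show "(v n - v (Suc n)) * real n * E n \<le> (v n - v (Suc n)) * real n * (e + (if n \<le> K then E n else 0))"
            by (simp add: mult_left_mono)
        qed
        also have "\<dots> = e * (\<Sum>n=1..N. (v n - v (Suc n)) * real n)
            + (\<Sum>n=1..N. (if n \<le> K then (v n - v (Suc n)) * real n * E n else 0))"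
          by (auto simp: sum_distrib_left sum.distrib[symmetric] algebra_simps intro!: sum.cong)
        also have "(\<Sum>n=1..N. (if n \<le> K then (v n - v (Suc n)) * real n * E n else 0)) = C"
        proof -
          have "(\<Sum>n=1..N. (if n \<le> K then (v n - v (Suc n)) * real n * E n else 0))
              = (\<Sum>n\<in>{1..N} \<inter> {n. n \<le> K}. (v n - v (Suc n)) * real n * E n)"
            by (simp add: sum.inter_restrict)
          also have "{1..N} \<inter> {n. n \<le> K} = {1..K}" using N by auto
          finally show ?thesis by (simp add: C_def)
        qed
        finally have t1': "(\<Sum>n=1..N. (v n - v (Suc n)) * real n * E n) \<le> e * (\<Sum>n=1..N. (v n - v (Suc n)) * real n) + C" .
        have t2: "v (Suc N) * real N * E N \<le> v (Suc N) * real N * e"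
          using K N vnn e by (intro mult_left_mono) auto
        have "Q N \<le> e * ((\<Sum>n=1..N. (v n - v (Suc n)) * real n) + v (Suc N) * real N) + C"
          unfolding Q_def using t1' t2 by (simp add: algebra_simps)
        then show ?thesis using ident[of N] by simp
      qed
      then have "Q N / V N \<le> C / V N + e" using VN by (simp add: field_simps)
      also have "C / V N \<le> e" using VN e by (simp add: field_simps)
      finally have "Q N / V N \<le> 2 * e" by simp
      moreover have "Q N / V N \<ge> 0" using Qnn VN by simp
      moreover have "norm (Q N / V N - 0) = Q N / V N"
        using \<open>Q N / V N \<ge> 0\<close> by (simp only: diff_zero real_norm_def abs_of_nonneg)
      ultimately show "norm (Q N / V N - 0) < r" using r e_def by linarith
    qed
  qed
qed


lemma weighted_L2:
  fixes M :: "'a measure" and f :: "nat \<Rightarrow> 'a \<Rightarrow> complex" and g :: "'a \<Rightarrow> complex"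
    and v :: "nat \<Rightarrow> real"
  assumes M: "prob_space M"
    and f_meas: "\<forall>n. f n \<in> borel_measurable M"
    and f_bdd: "\<forall>n. \<forall>x\<in>space M. cmod (f n x) \<le> 1"
    and g_meas: "g \<in> borel_measurable M"
    and g_L2: "integrable M (\<lambda>x. (cmod (g x))^2)"
    and conv: "(\<lambda>N. L2norm M (\<lambda>x. (\<Sum>n=1..N. f n x) / of_nat N - g x)) \<longlonglongrightarrow> 0"
    and vdec: "\<forall>n\<ge>1. v (Suc n) \<le> v n" and vnn: "\<forall>n. 0 \<le> v n"
    and Vinf: "filterlim (\<lambda>N. \<Sum>n=1..N. v n) at_top sequentially"
  shows "(\<lambda>N. L2norm M (\<lambda>x. (\<Sum>n=1..N. complex_of_real (v n) * f n x)
             / complex_of_real (\<Sum>n=1..N. v n) - g x)) \<longlonglongrightarrow> 0"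
proof -
  interpret prob_space M by fact
  have fm: "finite_measure M" by unfold_locales
  have sf: "sqi M (f n)" for n using sqi_bdd[OF fm] f_meas f_bdd by blast
  have sg: "sqi M g" using g_meas g_L2 by (simp add: sqi_def)
  have sng: "sqi M (\<lambda>x. - g x)" using sqi_cmult[OF sg, of "-1"] by simp
  define V where "V N = (\<Sum>n=1..N. v n)" for N
  define E where "E N = L2norm M (\<lambda>x. (\<Sum>n=1..N. f n x) / of_nat N - g x)" for N
  define T where "T n x = (\<Sum>k=1..n. (f k x - g x))" for n x
  have sT: "sqi M (T n)" for n
    unfolding T_def using sf sng sqi_add[OF sf sng] by (intro sqi_sum) auto
  have Tn: "T n x = of_nat n * ((\<Sum>k=1..n. f k x) / of_nat n - g x)" for n x
  proof (cases "n = 0")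
    case False
    have "of_nat n * ((\<Sum>k=1..n. f k x) / of_nat n - g x) = (\<Sum>k=1..n. f k x) - of_nat n * g x"
      using False by (simp add: right_diff_distrib)
    then show ?thesis by (simp add: T_def sum_subtractf)
  qed (simp add: T_def)
  have LT: "L2norm M (T n) = real n * E n" for n
  proof -
    have "T n = (\<lambda>x. of_nat n * ((\<Sum>k=1..n. f k x) / of_nat n - g x))" using Tn by (rule ext)
    then show ?thesis unfolding E_def by (simp only: L2norm_cmult norm_of_nat)
  qed
  have Enn: "\<forall>n. 0 \<le> E n" by (simp add: E_def L2norm_nonneg)
  define Q where "Q N = (\<Sum>n=1..N. (v n - v (Suc n)) * real n * E n) + v (Suc N) * real N * E N" for N
  have QV: "(\<lambda>N. Q N / V N) \<longlonglongrightarrow> 0"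
    unfolding Q_def V_def
    by (rule weighted_real[OF vdec vnn Vinf]) (use conv Enn in \<open>auto simp: E_def\<close>)
  have bound: "L2norm M (\<lambda>x. (\<Sum>n=1..N. complex_of_real (v n) * f n x)
             / complex_of_real (V N) - g x) \<le> Q N / V N" if VN: "V N > 0" for N
  proof -
    have eq: "(\<Sum>n=1..N. complex_of_real (v n) * f n x) / complex_of_real (V N) - g x
       = complex_of_real (1 / V N) * ((\<Sum>n=1..N. complex_of_real (v n - v (Suc n)) * T n x)
             + complex_of_real (v (Suc N)) * T N x)" for x
    proof -
      have "(\<Sum>n=1..N. complex_of_real (v n) * (f n x - g x))
          = (\<Sum>n=1..N. (complex_of_real (v n) - complex_of_real (v (Suc n))) * T n x)
             + complex_of_real (v (Suc N)) * T N x"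
        unfolding T_def by (rule abel_identity)
      moreover have "(\<Sum>n=1..N. complex_of_real (v n) * (f n x - g x))
          = (\<Sum>n=1..N. complex_of_real (v n) * f n x) - complex_of_real (V N) * g x"
        by (simp add: V_def algebra_simps sum_subtractf sum_distrib_right sum_distrib_left)
      ultimately have e2: "(\<Sum>n=1..N. (complex_of_real (v n) - complex_of_real (v (Suc n))) * T n x)
             + complex_of_real (v (Suc N)) * T N x = (\<Sum>n=1..N. complex_of_real (v n) * f n x) - complex_of_real (V N) * g x"
        by simp
      have VN': "complex_of_real (V N) \<noteq> 0" using VN by simp
      have e3: "(\<Sum>n=1..N. complex_of_real (v n - v (Suc n)) * T n x)
             + complex_of_real (v (Suc N)) * T N x = (\<Sum>n=1..N. complex_of_real (v n) * f n x) - complex_of_real (V N) * g x"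
        using e2 by (simp only: of_real_diff)
      have e4: "complex_of_real (1 / V N) * (S - complex_of_real (V N) * g x) = S / complex_of_real (V N) - g x" for S
        using VN' by (simp add: right_diff_distrib divide_inverse)
      show ?thesis unfolding e3 e4 ..
    qed
    have "L2norm M (\<lambda>x. (\<Sum>n=1..N. complex_of_real (v n) * f n x)
             / complex_of_real (V N) - g x)
        = (1 / V N) * L2norm M (\<lambda>x. (\<Sum>n=1..N. complex_of_real (v n - v (Suc n)) * T n x)
             + complex_of_real (v (Suc N)) * T N x)"
      unfolding eq L2norm_cmult[of M "complex_of_real (1 / V N)"] using VN by (simp only: norm_of_real) simp
    also have "L2norm M (\<lambda>x. (\<Sum>n=1..N. complex_of_real (v n - v (Suc n)) * T n x)
             + complex_of_real (v (Suc N)) * T N x)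
        \<le> L2norm M (\<lambda>x. (\<Sum>n=1..N. complex_of_real (v n - v (Suc n)) * T n x))
          + L2norm M (\<lambda>x. complex_of_real (v (Suc N)) * T N x)"
      by (intro L2_triangle sqi_sum ballI sqi_cmult sT) simp_all
    also have "L2norm M (\<lambda>x. (\<Sum>n=1..N. complex_of_real (v n - v (Suc n)) * T n x))
        \<le> (\<Sum>n=1..N. L2norm M (\<lambda>x. complex_of_real (v n - v (Suc n)) * T n x))"
      by (intro L2_sum) (auto intro: sqi_cmult sT)
    also have "(\<Sum>n=1..N. L2norm M (\<lambda>x. complex_of_real (v n - v (Suc n)) * T n x))
        = (\<Sum>n=1..N. (v n - v (Suc n)) * real n * E n)"
    proof (rule sum.cong)
      fix n assume n: "n \<in> {1..N}"
      then have "v n - v (Suc n) \<ge> 0" using vdec by auto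
      then show "L2norm M (\<lambda>x. complex_of_real (v n - v (Suc n)) * T n x) = (v n - v (Suc n)) * real n * E n"
        unfolding L2norm_cmult LT norm_of_real by simp
    qed simp
    also have "L2norm M (\<lambda>x. complex_of_real (v (Suc N)) * T N x) = v (Suc N) * real N * E N"
      using vnn unfolding L2norm_cmult LT norm_of_real by simp
    finally show ?thesis using VN by (simp add: Q_def divide_right_mono)
  qed
  have evV: "eventually (\<lambda>N. V N > 0) sequentially"
    using Vinf unfolding V_def filterlim_at_top_dense by blast
  show ?thesis
    unfolding V_def[symmetric]
  proof (rule tendsto_sandwich[OF _ _ tendsto_const QV])
    show "\<forall>\<^sub>F N in sequentially. 0 \<le> L2norm M (\<lambda>x. (\<Sum>n = 1..N. complex_of_real (v n) * f n x) / complex_of_real (V N) - g x)"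
      by (simp add: L2norm_nonneg)
    show "\<forall>\<^sub>F N in sequentially. L2norm M (\<lambda>x. (\<Sum>n = 1..N. complex_of_real (v n) * f n x) / complex_of_real (V N) - g x) \<le> Q N / V N"
      using evV by eventually_elim (rule bound)
  qed
qed


lemma mvt_within:
  fixes F F' :: "real \<Rightarrow> real"
  assumes d: "\<forall>x\<in>{x0..}. (F has_real_derivative F' x) (at x within {x0..})"
    and a: "x0 \<le> a" "a < b"
  shows "\<exists>\<xi>. a < \<xi> \<and> \<xi> < b \<and> F b - F a = F' \<xi> * (b - a)"
proof -
  have "\<exists>x\<in>{a<..<b}. F b - F a = (\<lambda>t. F' x * t) (b - a)"
  proof (rule mvt_simple[OF a(2)])
    fix x assume x: "a \<le> x" "x \<le> b"
    have sub: "{a..b} \<subseteq> {x0..}" using a by auto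
    have "x \<in> {x0..}" using x a by simp
    then have "(F has_real_derivative F' x) (at x within {x0..})" using d by blast
    then have "(F has_real_derivative F' x) (at x within {a..b})"
      using sub by (rule DERIV_subset)
    then show "(F has_derivative (\<lambda>t. F' x * t)) (at x within {a..b})"
      using has_field_derivative_def by blast
  qed
  then obtain x where "x \<in> {a<..<b}" "F b - F a = F' x * (b - a)" by blast
  then show ?thesis by auto
qed

lemma regvar_E:
  assumes "regvar c x0 h"
  obtains h1 h2 h3 C \<theta> \<theta>1 \<theta>2 \<theta>3 where "1 \<le> c" "c < 2" "1 \<le> x0"
    "C3_on {x0..} h h1 h2 h3"
    "\<forall>x\<ge>x0. 1 \<le> h x \<and> h1 x > 0 \<and> h2 x > 0"
    "C > 0" "C3_on {x0..} \<theta> \<theta>1 \<theta>2 \<theta>3"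
    "\<forall>x\<ge>x0. h x = C * x powr c * exp (integral {x0..x} (\<lambda>t. \<theta> t / t))"
    "(\<theta> \<longlongrightarrow> 0) at_top"
    "c = 1 \<Longrightarrow> ((\<lambda>x. x / h x) \<longlongrightarrow> 0) at_top"
proof -
  have "1 \<le> c \<and> c < 2 \<and> 1 \<le> x0" using assms unfolding regvar_def by (elim conjE) simp
  moreover have "\<exists>h1 h2 h3 C \<theta> \<theta>1 \<theta>2 \<theta>3. C3_on {x0..} h h1 h2 h3 \<and>
       (\<forall>x\<ge>x0. 1 \<le> h x \<and> h1 x > 0 \<and> h2 x > 0) \<and>
       C > 0 \<and> C3_on {x0..} \<theta> \<theta>1 \<theta>2 \<theta>3 \<and>
       (\<forall>x\<ge>x0. h x = C * x powr c * exp (integral {x0..x} (\<lambda>t. \<theta> t / t))) \<and>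
       (\<theta> \<longlongrightarrow> 0) at_top \<and>
       ((\<lambda>x. x * \<theta>1 x) \<longlongrightarrow> 0) at_top \<and>
       ((\<lambda>x. x^2 * \<theta>2 x) \<longlongrightarrow> 0) at_top \<and>
       ((\<lambda>x. x^3 * \<theta>3 x) \<longlongrightarrow> 0) at_top \<and>
       (c = 1 \<longrightarrow>
          (\<forall>x\<ge>x0. \<theta> x > 0) \<and>
          (\<forall>x y. x0 \<le> x \<longrightarrow> x \<le> y \<longrightarrow> \<theta> y \<le> \<theta> x) \<and>
          (\<forall>\<epsilon>>0. \<exists>K. \<forall>x\<ge>x0. 1 / \<theta> x \<le> K * x powr \<epsilon>) \<and>
          ((\<lambda>x. x / h x) \<longlongrightarrow> 0) at_top \<and>
          ((\<lambda>x. x * \<theta>1 x / \<theta> x) \<longlongrightarrow> 0) at_top \<and>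
          ((\<lambda>x. x^2 * \<theta>2 x / \<theta> x) \<longlongrightarrow> 0) at_top \<and>
          ((\<lambda>x. x^3 * \<theta>3 x / \<theta> x) \<longlongrightarrow> 0) at_top)"
    using assms[unfolded regvar_def, THEN conjunct2, THEN conjunct2, THEN conjunct2] .
  then obtain h1 h2 h3 C \<theta> \<theta>1 \<theta>2 \<theta>3 where B: "C3_on {x0..} h h1 h2 h3 \<and>
       (\<forall>x\<ge>x0. 1 \<le> h x \<and> h1 x > 0 \<and> h2 x > 0) \<and>
       C > 0 \<and> C3_on {x0..} \<theta> \<theta>1 \<theta>2 \<theta>3 \<and>
       (\<forall>x\<ge>x0. h x = C * x powr c * exp (integral {x0..x} (\<lambda>t. \<theta> t / t))) \<and>
       (\<theta> \<longlongrightarrow> 0) at_top \<and>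
       ((\<lambda>x. x * \<theta>1 x) \<longlongrightarrow> 0) at_top \<and>
       ((\<lambda>x. x^2 * \<theta>2 x) \<longlongrightarrow> 0) at_top \<and>
       ((\<lambda>x. x^3 * \<theta>3 x) \<longlongrightarrow> 0) at_top \<and>
       (c = 1 \<longrightarrow>
          (\<forall>x\<ge>x0. \<theta> x > 0) \<and>
          (\<forall>x y. x0 \<le> x \<longrightarrow> x \<le> y \<longrightarrow> \<theta> y \<le> \<theta> x) \<and>
          (\<forall>\<epsilon>>0. \<exists>K. \<forall>x\<ge>x0. 1 / \<theta> x \<le> K * x powr \<epsilon>) \<and>
          ((\<lambda>x. x / h x) \<longlongrightarrow> 0) at_top \<and>
          ((\<lambda>x. x * \<theta>1 x / \<theta> x) \<longlongrightarrow> 0) at_top \<and>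
          ((\<lambda>x. x^2 * \<theta>2 x / \<theta> x) \<longlongrightarrow> 0) at_top \<and>
          ((\<lambda>x. x^3 * \<theta>3 x / \<theta> x) \<longlongrightarrow> 0) at_top)"
    by blast
  ultimately show ?thesis using that by (elim conjE) blast
qed

lemma regvar_mono:
  assumes hR: "regvar c x0 h" and "x0 \<le> a" "a < b"
  shows "h a < h b"
proof -
  obtain h1 h2 h3 where C: "C3_on {x0..} h h1 h2 h3" and pos: "\<forall>x\<ge>x0. 1 \<le> h x \<and> h1 x > 0 \<and> h2 x > 0"
    using hR by (elim regvar_E)
  have d: "\<forall>x\<in>{x0..}. (h has_real_derivative h1 x) (at x within {x0..})" using C by (simp add: C3_on_def)
  obtain \<xi> where "a < \<xi>" "\<xi> < b" "h b - h a = h1 \<xi> * (b - a)" using mvt_within[OF d assms(2,3)] by blast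
  moreover have "h1 \<xi> > 0" using pos \<open>a < \<xi>\<close> assms by auto
  ultimately show ?thesis using assms mult_pos_pos[of "h1 \<xi>" "b - a"] by linarith
qed

lemma regvar_slope:
  assumes hR: "regvar c x0 h" and "x0 \<le> a" "a < b" "b < d"
  shows "(h b - h a) / (b - a) \<le> (h d - h b) / (d - b)"
proof -
  obtain h1 h2 h3 where C: "C3_on {x0..} h h1 h2 h3" and pos: "\<forall>x\<ge>x0. 1 \<le> h x \<and> h1 x > 0 \<and> h2 x > 0"
    using hR by (elim regvar_E)
  have d: "\<forall>x\<in>{x0..}. (h has_real_derivative h1 x) (at x within {x0..})"
    and d1: "\<forall>x\<in>{x0..}. (h1 has_real_derivative h2 x) (at x within {x0..})"
    using C by (auto simp: C3_on_def)
  obtain \<xi>1 where x1: "a < \<xi>1" "\<xi>1 < b" "h b - h a = h1 \<xi>1 * (b - a)" using mvt_within[OF d assms(2,3)] by blast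
  obtain \<xi>2 where x2: "b < \<xi>2" "\<xi>2 < d" "h d - h b = h1 \<xi>2 * (d - b)"
    using mvt_within[OF d _ assms(4)] assms by fastforce
  obtain \<eta> where e: "\<xi>1 < \<eta>" "\<eta> < \<xi>2" "h1 \<xi>2 - h1 \<xi>1 = h2 \<eta> * (\<xi>2 - \<xi>1)"
    using mvt_within[OF d1, of \<xi>1 \<xi>2] x1 x2 assms by fastforce
  have "h2 \<eta> > 0" using pos e x1 assms by auto
  then have "h1 \<xi>1 \<le> h1 \<xi>2" using e mult_pos_pos[of "h2 \<eta>" "\<xi>2 - \<xi>1"] by linarith
  moreover have "(h b - h a) / (b - a) = h1 \<xi>1" using x1 by (simp add: x1(3))
  moreover have "(h d - h b) / (d - b) = h1 \<xi>2" using x2 by (simp add: x2(3))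
  ultimately show ?thesis by simp
qed


lemma regvar_superlinear:
  assumes hR: "regvar c x0 h"
  shows "filterlim (\<lambda>x. h x / x) at_top at_top"
proof -
  obtain h1 h2 h3 C \<theta> \<theta>1 \<theta>2 \<theta>3 where c: "1 \<le> c" "c < 2" and x0: "1 \<le> x0"
    and "C3_on {x0..} h h1 h2 h3" and pos: "\<forall>x\<ge>x0. 1 \<le> h x \<and> h1 x > 0 \<and> h2 x > 0"
    and C: "C > 0" and Ct: "C3_on {x0..} \<theta> \<theta>1 \<theta>2 \<theta>3"
    and hform: "\<forall>x\<ge>x0. h x = C * x powr c * exp (integral {x0..x} (\<lambda>t. \<theta> t / t))"
    and th0: "(\<theta> \<longlongrightarrow> 0) at_top"
    and c1: "c = 1 \<Longrightarrow> ((\<lambda>x. x / h x) \<longlongrightarrow> 0) at_top"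
    using hR by (elim regvar_E) blast
  show ?thesis
  proof (cases "c = 1")
    case True
    have ev: "eventually (\<lambda>x. 0 < x / h x) at_top"
      using eventually_ge_at_top[of x0]
    proof eventually_elim
      case (elim x) then show ?case using pos x0 by auto
    qed
    have "filterlim (\<lambda>x. inverse (x / h x)) at_top at_top"
      by (rule filterlim_inverse_at_top[OF c1[OF True] ev])
    then show ?thesis by simp
  next
    case False
    then have c1': "c > 1" using c by simp
    define e where "e = (c - 1) / 2"
    have e: "e > 0" using c1' by (simp add: e_def)
    define I where "I x = integral {x0..x} (\<lambda>t. \<theta> t / t)" for x
    have contth: "continuous_on {x0..} \<theta>"
      unfolding continuous_on_eq_continuous_within
    proof
      fix x assume "x \<in> {x0..}"
      then have "(\<theta> has_real_derivative \<theta>1 x) (at x within {x0..})" using Ct by (simp add: C3_on_def)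
      then show "continuous (at x within {x0..}) \<theta>" by (rule DERIV_continuous)
    qed
    have intg: "(\<lambda>t. \<theta> t / t) integrable_on {a..b}" if "x0 \<le> a" for a b
    proof (rule integrable_continuous_interval)
      show "continuous_on {a..b} (\<lambda>t. \<theta> t / t)"
      proof (intro continuous_on_divide continuous_on_id)
        show "continuous_on {a..b} \<theta>" using that by (intro continuous_on_subset[OF contth]) auto
        show "\<forall>t\<in>{a..b}. t \<noteq> 0" using that x0 by auto
      qed
    qed
    have "eventually (\<lambda>t. dist (\<theta> t) 0 < e) at_top" using th0 e by (rule tendstoD)
    then obtain T0 where T0: "\<forall>t\<ge>T0. \<bar>\<theta> t\<bar> < e" by (auto simp: eventually_at_top_linorder)
    define T where "T = max T0 x0"
    have T: "T \<ge> x0" "T \<ge> 1" "\<forall>t\<ge>T. \<theta> t \<ge> - e" using T0 x0 by (auto simp: T_def abs_less_iff)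
    have Ibound: "I x \<ge> I T - e * (ln x - ln T)" if x: "x \<ge> T" for x
    proof -
      have "I T + integral {T..x} (\<lambda>t. \<theta> t / t) = I x"
        unfolding I_def using x T by (intro Henstock_Kurzweil_Integration.integral_combine intg) auto
      moreover have "integral {T..x} (\<lambda>t. \<theta> t / t) \<ge> (- e * ln x) - (- e * ln T)"
      proof (rule has_integral_le)
        show "((\<lambda>t. - e / t) has_integral (- e * ln x) - (- e * ln T)) {T..x}"
        proof (rule fundamental_theorem_of_calculus[OF x])
          fix t assume t: "t \<in> {T..x}"
          then have "t > 0" using T by auto
          then have "((\<lambda>t. - e * ln t) has_real_derivative (- e * (1 / t))) (at t within {T..x})"
            by (auto intro!: derivative_eq_intros)
          then show "((\<lambda>t. - e * ln t) has_vector_derivative - e / t) (at t within {T..x})"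
            by (simp add: has_real_derivative_iff_has_vector_derivative)
        qed
        show "((\<lambda>t. \<theta> t / t) has_integral integral {T..x} (\<lambda>t. \<theta> t / t)) {T..x}"
          using intg[of T x] T by (simp add: has_integral_integral)
        fix t assume t: "t \<in> {T..x}"
        then have "t > 0" "\<theta> t \<ge> - e" using T by auto
        then show "- e / t \<le> \<theta> t / t" using divide_right_mono[of "- e" "\<theta> t" t] by simp
      qed
      ultimately show ?thesis by (simp add: algebra_simps)
    qed
    define K where "K = C * exp (I T) * T powr e"
    have K: "K > 0" using C T by (simp add: K_def)
    have lower: "h x / x \<ge> K * x powr e" if x: "x \<ge> T" for x
    proof -
      have xp: "x > 0" using x T by simp
      have "h x / x = C * exp (I x) * x powr (c - 1)"
        using hform x T xp by (simp add: I_def powr_diff field_simps)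
      moreover have "exp (I x) \<ge> exp (I T) * T powr e * x powr (- e)"
      proof -
        have "exp (I T) * T powr e * x powr (- e) = exp (I T - e * (ln x - ln T))"
          using xp T by (simp add: powr_def exp_diff exp_add exp_minus field_simps)
        then show ?thesis using Ibound[OF x] by simp
      qed
      ultimately have "h x / x \<ge> C * (exp (I T) * T powr e * x powr (- e)) * x powr (c - 1)"
        using C by (simp add: mult_right_mono)
      also have "C * (exp (I T) * T powr e * x powr (- e)) * x powr (c - 1) = K * (x powr (- e) * x powr (c - 1))"
        by (simp add: K_def)
      also have "x powr (- e) * x powr (c - 1) = x powr e"
      proof -
        have "- e + (c - 1) = e" unfolding e_def by (simp add: field_simps)
        then show ?thesis using xp by (simp add: powr_add[symmetric])
      qed
      finally show ?thesis .
    qed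
    have "filterlim (\<lambda>x. x powr e) at_top at_top"
    proof -
      have "((\<lambda>x. x powr (- e)) \<longlongrightarrow> 0) at_top"
        using e by (intro tendsto_neg_powr filterlim_ident) auto
      moreover have "eventually (\<lambda>x. 0 < x powr (- e)) at_top"
        using eventually_gt_at_top[of 0] by eventually_elim simp
      ultimately have "filterlim (\<lambda>x. inverse (x powr (- e))) at_top at_top"
        by (rule filterlim_inverse_at_top)
      then show ?thesis by (simp add: powr_minus)
    qed
    then have "filterlim (\<lambda>x. K * x powr e) at_top at_top"
      using K by (intro filterlim_tendsto_pos_mult_at_top[OF tendsto_const]) auto
    then show ?thesis
      by (rule filterlim_at_top_mono) (use lower in \<open>auto simp: eventually_at_top_linorder\<close>)
  qed
qed


lemma final_limsup:
  fixes L R a e :: "nat \<Rightarrow> real"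
  assumes a: "a \<longlonglongrightarrow> 1" and e: "e \<longlonglongrightarrow> 0"
    and ev: "eventually (\<lambda>N. L N \<le> a N * R N + e N) sequentially"
    and Rnn: "\<forall>N. R N \<ge> 0"
  shows "limsup (\<lambda>N. ereal (L N)) \<le> limsup (\<lambda>N. ereal (R N))"
proof -
  have step: "limsup (\<lambda>N. ereal (L N)) \<le> ereal (1 + d) * limsup (\<lambda>N. ereal (R N))" if d: "d > 0" for d
  proof -
    have "eventually (\<lambda>N. dist (a N) 1 < d) sequentially" using a d by (rule tendstoD)
    then have "eventually (\<lambda>N. ereal (L N) \<le> ereal (1 + d) * ereal (R N) + ereal (e N)) sequentially"
      using ev
    proof eventually_elim
      case (elim N)
      then have "a N \<le> 1 + d" by (simp add: dist_real_def abs_less_iff)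
      then have "a N * R N \<le> (1 + d) * R N" using Rnn by (simp add: mult_right_mono)
      then show ?case using elim by simp
    qed
    then have "limsup (\<lambda>N. ereal (L N)) \<le> limsup (\<lambda>N. ereal (1 + d) * ereal (R N) + ereal (e N))"
      by (rule Limsup_mono)
    also have "\<dots> \<le> limsup (\<lambda>N. ereal (1 + d) * ereal (R N)) + limsup (\<lambda>N. ereal (e N))"
      by (rule ereal_limsup_add_mono)
    also have "limsup (\<lambda>N. ereal (1 + d) * ereal (R N)) = ereal (1 + d) * limsup (\<lambda>N. ereal (R N))"
      using d by (intro limsup_ereal_mult_left) simp
    also have "limsup (\<lambda>N. ereal (e N)) = 0"
      using lim_imp_Limsup[OF trivial_limit_sequentially tendsto_ereal[OF e]] by (simp add: zero_ereal_def)
    finally show ?thesis by simp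
  qed
  show ?thesis
  proof (cases "limsup (\<lambda>N. ereal (R N))")
    case (real r)
    show ?thesis
    proof (rule ereal_le_epsilon2)
      fix eps :: real assume eps: "eps > 0"
      define d where "d = eps / (\<bar>r\<bar> + 1)"
      have d: "d > 0" using eps by (simp add: d_def add_pos_nonneg)
      have "d * r \<le> d * \<bar>r\<bar>" using d by (simp add: mult_left_mono)
      also have "d * \<bar>r\<bar> \<le> eps" unfolding d_def using eps
        by (simp add: field_simps mult_left_mono)
      finally have "(1 + d) * r \<le> r + eps" by (simp add: algebra_simps)
      then show "limsup (\<lambda>N. ereal (L N)) \<le> limsup (\<lambda>N. ereal (R N)) + ereal eps"
        using step[OF d] real order_trans by fastforce
    qed
  next
    case PInf then show ?thesis by simp
  next
    case MInf
    then have "limsup (\<lambda>N. ereal (L N)) \<le> ereal 2 * (- \<infinity>)" using step[of 1] by simp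
    then show ?thesis using MInf by simp
  qed
qed


locale P21 =
  fixes c x0 :: real and h \<phi> :: "real \<Rightarrow> real"
  assumes hR: "regvar c x0 h"
    and phi_inv: "\<forall>y\<ge>h x0. x0 \<le> \<phi> y \<and> h (\<phi> y) = y"
begin

lemma x0: "1 \<le> x0" using hR by (elim regvar_E)

lemma h_le_iff: "x0 \<le> a \<Longrightarrow> x0 \<le> b \<Longrightarrow> h a \<le> h b \<longleftrightarrow> a \<le> b"
proof -
  assume a: "x0 \<le> a" "x0 \<le> b"
  show ?thesis
  proof
    assume "h a \<le> h b"
    then show "a \<le> b" using regvar_mono[OF hR, of b a] a by (meson not_le)
  next
    assume "a \<le> b"
    then show "h a \<le> h b" using regvar_mono[OF hR, of a b] a by (cases "a = b") auto
  qed
qed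

lemma h_less_iff: "x0 \<le> a \<Longrightarrow> x0 \<le> b \<Longrightarrow> h a < h b \<longleftrightarrow> a < b"
  using h_le_iff[of b a] by (auto simp: not_le)

lemma phi_ge: "h x0 \<le> y \<Longrightarrow> x0 \<le> \<phi> y" using phi_inv by blast
lemma h_phi: "h x0 \<le> y \<Longrightarrow> h (\<phi> y) = y" using phi_inv by blast

lemma le_h_iff: "h x0 \<le> y \<Longrightarrow> x0 \<le> z \<Longrightarrow> y \<le> h z \<longleftrightarrow> \<phi> y \<le> z"
  using h_le_iff[of "\<phi> y" z] phi_ge h_phi by simp

lemma h_less_iff2: "h x0 \<le> y \<Longrightarrow> x0 \<le> z \<Longrightarrow> h z < y \<longleftrightarrow> z < \<phi> y"
  using le_h_iff[of y z] by (auto simp: not_le)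

lemma phi_less: "h x0 \<le> y \<Longrightarrow> y < y' \<Longrightarrow> \<phi> y < \<phi> y'"
proof (rule ccontr)
  assume a: "h x0 \<le> y" "y < y'" "\<not> \<phi> y < \<phi> y'"
  then have "y' \<le> h (\<phi> y)" using le_h_iff[of y' "\<phi> y"] phi_ge[of y] by simp
  then show False using a h_phi by simp
qed

definition w :: "nat \<Rightarrow> real" where "w m = \<phi> (real m + 1) - \<phi> (real m)"

lemma w_pos: "h x0 \<le> real m \<Longrightarrow> w m > 0"
  unfolding w_def using phi_less[of "real m" "real m + 1"] by simp

lemma w_dec: assumes m: "h x0 \<le> real m" shows "w (Suc m) \<le> w m"
proof -
  define a where "a = \<phi> (real m)"
  define b where "b = \<phi> (real m + 1)"
  define d where "d = \<phi> (real m + 2)"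
  have ab: "a < b" unfolding a_def b_def using phi_less m by simp
  have bd: "b < d" unfolding b_def d_def using phi_less m by simp
  have "x0 \<le> a" unfolding a_def using phi_ge m by simp
  from regvar_slope[OF hR this ab bd]
  have "(h b - h a) / (b - a) \<le> (h d - h b) / (d - b)" .
  moreover have "h a = real m" "h b = real m + 1" "h d = real m + 2"
    unfolding a_def b_def d_def using h_phi m by auto
  ultimately have "1 / (b - a) \<le> 1 / (d - b)" by simp
  then have "d - b \<le> b - a" using ab bd by (simp add: divide_le_cancel field_simps)
  moreover have e1: "real m + 1 + 1 = real m + 2" "real (Suc m) = real m + 1" by simp_all
  moreover have "w (Suc m) = d - b" "w m = b - a"
    unfolding w_def a_def b_def d_def e1(2) e1(1) by (simp_all only:)
  ultimately show ?thesis by simp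
qed

lemma w_dec_le: assumes "h x0 \<le> real m" "m \<le> n" shows "w n \<le> w m"
  using assms(2)
proof (induction n rule: dec_induct)
  case base then show ?case by simp
next
  case (step n)
  then have "h x0 \<le> real n" using assms(1) by linarith
  then show ?case using w_dec[of n] step by simp
qed

lemma phi_tendsto: "filterlim (\<lambda>n::nat. \<phi> (real n)) at_top sequentially"
  unfolding filterlim_at_top
proof
  fix Z :: real
  define Z' where "Z' = max Z x0"
  have "eventually (\<lambda>n::nat. real n \<ge> max (h x0) (h Z' + 1)) sequentially"
    by (rule eventually_sequentiallyI[of "nat \<lceil>max (h x0) (h Z' + 1)\<rceil>"]) linarith
  then show "eventually (\<lambda>n::nat. Z \<le> \<phi> (real n)) sequentially"
  proof eventually_elim
    case (elim n)
    have "\<not> \<phi> (real n) \<le> Z'"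
    proof
      assume "\<phi> (real n) \<le> Z'"
      then have "real n \<le> h Z'" using le_h_iff[of "real n" Z'] elim by (simp add: Z'_def)
      then show False using elim by simp
    qed
    then show ?case by (simp add: Z'_def)
  qed
qed

lemma w_eventually_le1: "\<exists>M. h x0 \<le> real M \<and> (\<forall>m\<ge>M. w m \<le> 1)"
proof -
  obtain M0 :: nat where M0: "h x0 \<le> real M0" by (meson real_arch_simple)
  have "\<exists>M\<ge>M0. w M \<le> 1"
  proof (rule ccontr)
    assume "\<not> (\<exists>M\<ge>M0. w M \<le> 1)"
    then have big: "\<forall>M\<ge>M0. w M > 1" by auto
    have grow: "\<phi> (real (M0 + k)) \<ge> \<phi> (real M0) + real k" for k
    proof (induction k)
      case 0 then show ?case by simp
    next
      case (Suc k)
      have "w (M0 + k) > 1" using big by simp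
      moreover have r: "real (M0 + Suc k) = real (M0 + k) + 1" by simp
      moreover have "w (M0 + k) = \<phi> (real (M0 + k) + 1) - \<phi> (real (M0 + k))" by (rule w_def)
      ultimately show ?case using Suc by (simp only: r)
    qed
    have "eventually (\<lambda>x. h x / x \<ge> 2) at_top"
      using regvar_superlinear[OF hR] by (simp add: filterlim_at_top)
    then obtain X where X: "\<forall>x\<ge>X. h x / x \<ge> 2" by (auto simp: eventually_at_top_linorder)
    define a where "a = \<phi> (real M0)"
    have a: "a \<ge> x0" unfolding a_def using phi_ge M0 by simp
    obtain k :: nat where k: "real k \<ge> max X (real M0 + 1)" by (meson real_arch_simple)
    define x where "x = a + real k"
    have xpos: "x > 0" "x \<ge> X" "x \<ge> x0" using a x0 k by (auto simp: x_def)
    have "h x \<le> h (\<phi> (real (M0 + k)))"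
      using h_le_iff[of x "\<phi> (real (M0 + k))"] grow[of k] xpos phi_ge[of "real (M0+k)"] M0
      by (simp add: x_def a_def)
    also have "\<dots> = real M0 + real k" using h_phi[of "real (M0 + k)"] M0 by simp
    finally have hx: "h x \<le> real M0 + real k" .
    have "h x \<ge> 2 * x" using X xpos by (auto simp: field_simps)
    then have "2 * (a + real k) \<le> real M0 + real k" using hx by (simp add: x_def)
    moreover have "real k \<ge> real M0 + 1" using k by simp
    ultimately show False using a x0 by argo
  qed
  then obtain M where M: "M \<ge> M0" "w M \<le> 1" by blast
  have "h x0 \<le> real M" using M0 M by linarith
  moreover have "\<forall>m\<ge>M. w m \<le> 1" using w_dec_le[OF \<open>h x0 \<le> real M\<close>] M by (meson order_trans)
  ultimately show ?thesis by blast
qed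

lemma small_bound: "\<exists>B. \<forall>n::nat. 1 \<le> n \<longrightarrow> real n < x0 \<longrightarrow> nat \<lfloor>h (real n)\<rfloor> \<le> B"
proof -
  have fin: "finite {n::nat. real n < x0}"
    by (rule finite_subset[of _ "{..nat \<lceil>x0\<rceil>}"]) (auto, linarith)
  then have "finite ((\<lambda>n. nat \<lfloor>h (real n)\<rfloor>) ` {n::nat. real n < x0})" by simp
  then obtain B where "\<forall>m\<in>(\<lambda>n. nat \<lfloor>h (real n)\<rfloor>) ` {n::nat. real n < x0}. m \<le> B"
    using finite_nat_set_iff_bounded_le by blast
  then show ?thesis by auto
qed

lemma memb_iff:
  assumes B: "\<forall>n::nat. 1 \<le> n \<longrightarrow> real n < x0 \<longrightarrow> nat \<lfloor>h (real n)\<rfloor> \<le> B"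
    and m: "m > B" "h x0 \<le> real m"
  shows "m \<in> Nh h \<longleftrightarrow> \<lceil>\<phi> (real m)\<rceil> < \<lceil>\<phi> (real m + 1)\<rceil>"
proof
  assume "m \<in> Nh h"
  then obtain n :: nat where n: "1 \<le> n" "\<lfloor>h (real n)\<rfloor> = int m" by (auto simp: Nh_def)
  have nx: "x0 \<le> real n"
  proof (rule ccontr)
    assume "\<not> x0 \<le> real n"
    then have "nat \<lfloor>h (real n)\<rfloor> \<le> B" using B[rule_format, of n] n by simp
    then show False using n m by simp
  qed
  have "real m \<le> h (real n)" "h (real n) < real m + 1" using n(2) by linarith+
  then have "\<phi> (real m) \<le> real n" "real n < \<phi> (real m + 1)"
    using le_h_iff[of "real m" "real n"] h_less_iff2[of "real m + 1" "real n"] m nx by auto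
  then have "\<lceil>\<phi> (real m)\<rceil> \<le> int n" "int n < \<lceil>\<phi> (real m + 1)\<rceil>"
    by (simp_all add: ceiling_le_iff less_ceiling_iff)
  then show "\<lceil>\<phi> (real m)\<rceil> < \<lceil>\<phi> (real m + 1)\<rceil>" by simp
next
  assume lt: "\<lceil>\<phi> (real m)\<rceil> < \<lceil>\<phi> (real m + 1)\<rceil>"
  define k where "k = \<lceil>\<phi> (real m)\<rceil>"
  have k1: "real_of_int k \<ge> \<phi> (real m)" unfolding k_def by simp
  have k2: "real_of_int k < \<phi> (real m + 1)"
    using lt unfolding k_def by (meson ceiling_less_iff less_ceiling_iff le_less_trans not_le)
  have phm: "\<phi> (real m) \<ge> x0" using phi_ge m by simp
  then have kpos: "k \<ge> 1" using k1 x0 by linarith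
  define n where "n = nat k"
  have rn: "real n = real_of_int k" using kpos by (simp add: n_def)
  have nx: "x0 \<le> real n" using rn k1 phm by linarith
  have "real m \<le> h (real n)" using le_h_iff[of "real m" "real n"] m nx k1 rn by simp
  moreover have "h (real n) < real m + 1" using h_less_iff2[of "real m + 1" "real n"] m nx k2 rn by simp
  ultimately have "\<lfloor>h (real n)\<rfloor> = int m" by linarith
  moreover have "1 \<le> n" using kpos by (simp add: n_def)
  ultimately show "m \<in> Nh h" by (auto simp: Nh_def)
qed

definition s :: "nat \<Rightarrow> real" where "s m = sawtooth (- \<phi> (real m + 1)) - sawtooth (- \<phi> (real m))"

lemma ceil_frac: "real_of_int \<lceil>y\<rceil> = y + frac (- y)"
  by (simp add: frac_def ceiling_def)

lemma ind_eq:
  assumes B: "\<forall>n::nat. 1 \<le> n \<longrightarrow> real n < x0 \<longrightarrow> nat \<lfloor>h (real n)\<rfloor> \<le> B"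
    and m: "m > B" "h x0 \<le> real m" and w1: "w m \<le> 1"
  shows "(if m \<in> Nh h then 1 else 0) = w m + s m"
proof -
  define a where "a = \<phi> (real m)"
  define b where "b = \<phi> (real m + 1)"
  have ab: "a < b" "b - a \<le> 1" using w_pos[OF m(2)] w1 by (auto simp: w_def a_def b_def)
  have c1: "\<lceil>a\<rceil> \<le> \<lceil>b\<rceil>" using ab by (simp add: ceiling_mono)
  have c2: "\<lceil>b\<rceil> \<le> \<lceil>a\<rceil> + 1"
  proof -
    have "real_of_int \<lceil>b\<rceil> < b + 1" by linarith
    also have "\<dots> \<le> a + 2" using ab by simp
    also have "\<dots> \<le> real_of_int \<lceil>a\<rceil> + 2" by linarith
    finally show ?thesis by linarith
  qed
  have ws: "w m + s m = real_of_int \<lceil>b\<rceil> - real_of_int \<lceil>a\<rceil>"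
    unfolding w_def s_def sawtooth_def a_def[symmetric] b_def[symmetric] ceil_frac by simp
  show ?thesis
    unfolding memb_iff[OF B m] ws a_def[symmetric] b_def[symmetric]
    using c1 c2 by auto
qed

lemma exists_m0:
  "\<exists>m0::nat. 1 \<le> m0 \<and> h x0 \<le> real m0 \<and> (\<forall>m\<ge>m0. w m \<le> 1) \<and>
     (\<forall>m\<ge>m0. (if m \<in> Nh h then 1 else 0) = w m + s m)"
proof -
  obtain B where B: "\<forall>n::nat. 1 \<le> n \<longrightarrow> real n < x0 \<longrightarrow> nat \<lfloor>h (real n)\<rfloor> \<le> B"
    using small_bound by blast
  obtain M where M: "h x0 \<le> real M" "\<forall>m\<ge>M. w m \<le> 1" using w_eventually_le1 by blast
  define m0 where "m0 = max M (B + 1)"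
  have "1 \<le> m0" "h x0 \<le> real m0" "\<forall>m\<ge>m0. w m \<le> 1" using M by (auto simp: m0_def)
  moreover have "\<forall>m\<ge>m0. (if m \<in> Nh h then 1 else 0) = w m + s m"
  proof (intro allI impI)
    fix m assume "m \<ge> m0"
    then show "(if m \<in> Nh h then 1 else 0) = w m + s m"
      using M by (intro ind_eq[OF B]) (auto simp: m0_def)
  qed
  ultimately show ?thesis by blast
qed

end


lemma alg_id: fixes d k vv Sv Ss Se g :: complex
  assumes "k \<noteq> 0" "vv \<noteq> 0" "d \<noteq> 0"
  shows "(Sv + Ss + Se)/k - g = (d/k) * ((1/d) * Ss) + (vv/k) * (Sv/vv - g) + (vv/k - 1) * g + (1/k) * Se"
  using assms by (simp add: field_simps)

lemma ratio_to_1: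
  fixes X Y :: "nat \<Rightarrow> real"
  assumes X: "filterlim X at_top sequentially"
    and ev: "eventually (\<lambda>N. \<bar>Y N - X N\<bar> \<le> c) sequentially"
  shows "(\<lambda>N. Y N / X N) \<longlonglongrightarrow> 1"
proof -
  have Xinf: "filterlim X at_infinity sequentially" by (rule filterlim_at_top_imp_at_infinity[OF X])
  have evX: "eventually (\<lambda>N. X N > 0) sequentially" using X by (simp add: filterlim_at_top_dense)
  have c0: "(\<lambda>N. c / X N) \<longlonglongrightarrow> 0" by (rule tendsto_divide_0[OF tendsto_const Xinf])
  have c0': "(\<lambda>N. - c / X N) \<longlonglongrightarrow> 0" using tendsto_minus[OF c0] by simp
  have "(\<lambda>N. (Y N - X N) / X N) \<longlonglongrightarrow> 0"
  proof (rule tendsto_sandwich[OF _ _ c0' c0])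
    show "eventually (\<lambda>N. - c / X N \<le> (Y N - X N) / X N) sequentially"
      using ev evX
    proof eventually_elim
      case (elim N)
      then have "- c \<le> Y N - X N" by (simp add: abs_le_iff)
      then show ?case using divide_right_mono[of "-c" "Y N - X N" "X N"] elim by simp
    qed
    show "eventually (\<lambda>N. (Y N - X N) / X N \<le> c / X N) sequentially"
      using ev evX
    proof eventually_elim
      case (elim N)
      then have "Y N - X N \<le> c" by (simp add: abs_le_iff)
      then show ?case using divide_right_mono[of "Y N - X N" c "X N"] elim by simp
    qed
  qed
  then have "(\<lambda>N. (Y N - X N) / X N + 1) \<longlonglongrightarrow> 0 + 1" by (intro tendsto_add) auto
  moreover have "eventually (\<lambda>N. (Y N - X N) / X N + 1 = Y N / X N) sequentially"
    using evX by eventually_elim (simp add: field_simps)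
  ultimately show ?thesis by (simp add: tendsto_cong)
qed

locale P21b = P21 c x0 h \<phi> for c x0 h \<phi> +
  fixes M :: "'a measure" and f :: "nat \<Rightarrow> 'a \<Rightarrow> complex" and g :: "'a \<Rightarrow> complex" and m0 :: nat
  assumes M: "prob_space M"
    and f_meas: "\<forall>n. f n \<in> borel_measurable M"
    and f_bdd: "\<forall>n. \<forall>x\<in>space M. cmod (f n x) \<le> 1"
    and g_meas: "g \<in> borel_measurable M"
    and g_L2: "integrable M (\<lambda>x. (cmod (g x))^2)"
    and conv: "(\<lambda>N. L2norm M (\<lambda>x. (\<Sum>n=1..N. f n x) / of_nat N - g x)) \<longlonglongrightarrow> 0"
    and m0_1: "1 \<le> m0" and m0_h: "h x0 \<le> real m0" and m0_w: "\<forall>m\<ge>m0. w m \<le> 1"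
    and m0_ind: "\<forall>m\<ge>m0. (if m \<in> Nh h then 1 else 0) = w m + s m"
begin

definition v :: "nat \<Rightarrow> real" where "v n = w (max n m0)"
definition V :: "nat \<Rightarrow> real" where "V N = (\<Sum>n=1..N. v n)"
definition chi :: "nat \<Rightarrow> real" where "chi n = (if n \<in> Nh h then 1 else 0)"
definition err :: "nat \<Rightarrow> real" where "err n = chi n - v n - s n"
definition K :: "nat \<Rightarrow> real" where "K N = real (card (Nh h \<inter> {1..N}))"
definition D :: "nat \<Rightarrow> real" where "D N = real_of_int \<lfloor>\<phi> (real N)\<rfloor>"
definition Eb :: real where "Eb = (\<Sum>n=1..m0. \<bar>err n\<bar>)"
definition Er :: real where "Er = (\<Sum>n=1..m0. err n)"
definition c2 :: real where "c2 = real (m0 - 1) * w m0 - \<phi> (real m0)"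

lemma v_nn: "v n \<ge> 0"
  unfolding v_def using w_pos[of "max n m0"] m0_h by (simp add: less_imp_le)

lemma v_dec: "\<forall>n\<ge>1. v (Suc n) \<le> v n"
proof (intro allI impI)
  fix n :: nat assume "n \<ge> 1"
  show "v (Suc n) \<le> v n"
  proof (cases "n \<ge> m0")
    case True
    then have "h x0 \<le> real n" using m0_h by linarith
    then show ?thesis using True w_dec[of n] by (simp add: v_def max_def)
  next
    case False
    then show ?thesis using w_dec_le[OF m0_h, of "max (Suc n) m0"] by (simp add: v_def)
  qed
qed

lemma err_zero: "n \<ge> m0 \<Longrightarrow> err n = 0"
  using m0_ind by (simp add: err_def chi_def v_def max_def)

lemma w_tele: "w i = \<phi> (real (Suc i)) - \<phi> (real i)"
  by (simp add: w_def add.commute)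

lemma V_eq: assumes N: "N \<ge> m0" shows "V N = \<phi> (real N + 1) + c2"
proof -
  have split: "{1..N} = {1..<m0} \<union> {m0..N}" using N m0_1 by auto
  have "V N = (\<Sum>n\<in>{1..<m0}. v n) + (\<Sum>n\<in>{m0..N}. v n)"
    unfolding V_def split by (rule sum.union_disjoint) auto
  also have "(\<Sum>n\<in>{1..<m0}. v n) = (\<Sum>n\<in>{1..<m0}. w m0)"
    by (rule sum.cong) (auto simp: v_def)
  also have "\<dots> = real (m0 - 1) * w m0" by simp
  also have "(\<Sum>n\<in>{m0..N}. v n) = (\<Sum>n\<in>{m0..N}. \<phi> (real (Suc n)) - \<phi> (real n))"
    by (rule sum.cong) (auto simp: v_def w_tele)
  also have "\<dots> = \<phi> (real (Suc N)) - \<phi> (real m0)"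
    using N by (intro sum_Suc_diff) simp
  finally show ?thesis by (simp add: c2_def add.commute)
qed

lemma Vinf: "filterlim V at_top sequentially"
proof -
  have "filterlim (\<lambda>N. \<phi> (real (Suc N))) at_top sequentially"
    using phi_tendsto by (subst filterlim_sequentially_Suc)
  then have "filterlim (\<lambda>N. c2 + \<phi> (real (Suc N))) at_top sequentially"
    by (intro filterlim_tendsto_add_at_top[OF tendsto_const])
  moreover have ev2: "eventually (\<lambda>N. c2 + \<phi> (real (Suc N)) = V N) sequentially"
    using eventually_ge_at_top[of m0] by eventually_elim (simp add: V_eq add.commute)
  ultimately show ?thesis using filterlim_cong[OF refl refl ev2] by simp
qed

lemma K_sum: "K N = (\<Sum>n=1..N. chi n)"
proof -
  have "Nh h \<inter> {1..N} = {1..N} \<inter> Nh h" by auto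
  then have "K N = (\<Sum>n\<in>{1..N} \<inter> Nh h. 1)" by (simp add: K_def)
  also have "\<dots> = (\<Sum>n=1..N. chi n)" by (subst sum.inter_restrict) (auto simp: chi_def)
  finally show ?thesis .
qed

lemma sawtooth_bd: "\<bar>sawtooth y\<bar> \<le> 1/2"
  unfolding sawtooth_def abs_le_iff using frac_lt_1[of y] frac_ge_0[of y] by linarith

lemma S_sum: "\<bar>\<Sum>n=1..N. s n\<bar> \<le> 1"
proof -
  have "(\<Sum>n=1..N. s n) = (\<Sum>n=1..N. sawtooth (- \<phi> (real (Suc n))) - sawtooth (- \<phi> (real n)))"
    by (rule sum.cong) (auto simp: s_def add.commute)
  also have "\<dots> = sawtooth (- \<phi> (real (Suc N))) - sawtooth (- \<phi> (real 1))"
    by (intro sum_Suc_diff[where f = "\<lambda>i. sawtooth (- \<phi> (real i))"]) simp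
  finally show ?thesis using sawtooth_bd[of "- \<phi> (real (Suc N))"] sawtooth_bd[of "- \<phi> (real 1)"]
    by linarith
qed

lemma err_sum: assumes "N \<ge> m0" shows "(\<Sum>n=1..N. err n) = Er" and "(\<Sum>n=1..N. \<bar>err n\<bar>) = Eb"
proof -
  show "(\<Sum>n=1..N. err n) = Er" unfolding Er_def
    using assms by (intro sum.mono_neutral_right) (auto intro: err_zero)
  show "(\<Sum>n=1..N. \<bar>err n\<bar>) = Eb" unfolding Eb_def
    using assms by (intro sum.mono_neutral_right) (auto intro: err_zero)
qed

lemma K_V: assumes "N \<ge> m0" shows "\<bar>K N - V N\<bar> \<le> 1 + \<bar>Er\<bar>"
proof -
  have "K N = (\<Sum>n=1..N. v n + s n + err n)" unfolding K_sum by (simp add: err_def)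
  also have "\<dots> = V N + (\<Sum>n=1..N. s n) + (\<Sum>n=1..N. err n)" by (simp add: sum.distrib V_def)
  finally show ?thesis using err_sum[OF assms] S_sum[of N] by linarith
qed

lemma D_V: assumes N: "N \<ge> m0" shows "\<bar>D N - V N\<bar> \<le> 2 + \<bar>c2\<bar>"
proof -
  have "h x0 \<le> real N" using N m0_h by linarith
  then have "w N > 0" "w N \<le> 1" using w_pos m0_w N by auto
  then have "\<phi> (real N) < \<phi> (real N + 1)" "\<phi> (real N + 1) \<le> \<phi> (real N) + 1" by (auto simp: w_def)
  moreover have "D N \<le> \<phi> (real N)" "D N > \<phi> (real N) - 1" unfolding D_def by linarith+
  ultimately show ?thesis using V_eq[OF N] by linarith
qed

lemma KV1: "(\<lambda>N. K N / V N) \<longlonglongrightarrow> 1"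
proof (rule ratio_to_1[OF Vinf])
  show "eventually (\<lambda>N. \<bar>K N - V N\<bar> \<le> 1 + \<bar>Er\<bar>) sequentially"
    using eventually_ge_at_top[of m0] by eventually_elim (rule K_V)
qed

lemma DV1: "(\<lambda>N. D N / V N) \<longlonglongrightarrow> 1"
proof (rule ratio_to_1[OF Vinf])
  show "eventually (\<lambda>N. \<bar>D N - V N\<bar> \<le> 2 + \<bar>c2\<bar>) sequentially"
    using eventually_ge_at_top[of m0] by eventually_elim (rule D_V)
qed

lemma Kinf: "filterlim K at_top sequentially"
proof -
  have "filterlim (\<lambda>N. (- 1 - \<bar>Er\<bar>) + V N) at_top sequentially"
    by (rule filterlim_tendsto_add_at_top[OF tendsto_const Vinf])
  moreover have "eventually (\<lambda>N. (- 1 - \<bar>Er\<bar>) + V N \<le> K N) sequentially"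
    using eventually_ge_at_top[of m0]
  proof eventually_elim
    case (elim N) then show ?case using K_V[of N] by linarith
  qed
  ultimately show ?thesis by (rule filterlim_at_top_mono)
qed

lemma sf: "sqi M (f n)"
proof -
  interpret prob_space M by (rule M)
  have fm: "finite_measure M" by unfold_locales
  show ?thesis using sqi_bdd[OF fm] f_meas f_bdd by blast
qed

lemma sg: "sqi M g" using g_meas g_L2 by (simp add: sqi_def)

lemma Lf_le1: "L2norm M (f n) \<le> 1"
  using L2norm_bdd[OF M] f_meas f_bdd by blast

definition Afun :: "nat \<Rightarrow> 'a \<Rightarrow> complex" where
  "Afun N x = (\<Sum>n=1..N. complex_of_real
               ((sawtooth (- \<phi> (real n + 1)) - sawtooth (- \<phi> (real n)))
                  / of_int \<lfloor>\<phi> (real N)\<rfloor>) * f n x)"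
definition Wfun :: "nat \<Rightarrow> 'a \<Rightarrow> complex" where
  "Wfun N x = (\<Sum>n=1..N. complex_of_real (v n) * f n x)
             / complex_of_real (\<Sum>n=1..N. v n) - g x"
definition Efun :: "nat \<Rightarrow> 'a \<Rightarrow> complex" where
  "Efun N x = (\<Sum>n=1..N. complex_of_real (err n) * f n x)"
definition Lfun :: "nat \<Rightarrow> 'a \<Rightarrow> complex" where
  "Lfun N x = (\<Sum>n\<in>Nh h \<inter> {1..N}. f n x) / of_nat (card (Nh h \<inter> {1..N})) - g x"

lemma sA: "sqi M (Afun N)"
  unfolding Afun_def by (intro sqi_sum ballI sqi_cmult sf) simp
lemma sW: "sqi M (Wfun N)"
proof -
  have "sqi M (\<lambda>x. (\<Sum>n=1..N. complex_of_real (v n) * f n x) / complex_of_real (\<Sum>n=1..N. v n))"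
    using sqi_cmult[OF sqi_sum[of "{1..N}" M "\<lambda>n x. complex_of_real (v n) * f n x"],
        of "1 / complex_of_real (\<Sum>n=1..N. v n)"]
    by (simp add: sqi_cmult sf)
  moreover have "sqi M (\<lambda>x. - g x)" using sqi_cmult[OF sg, of "-1"] by simp
  ultimately show ?thesis unfolding Wfun_def using sqi_add by fastforce
qed
lemma sE: "sqi M (Efun N)"
  unfolding Efun_def by (intro sqi_sum ballI sqi_cmult sf) simp

lemma pointwise:
  assumes K0: "K N \<noteq> 0" and V0: "V N \<noteq> 0" and D0: "D N \<noteq> 0"
  shows "Lfun N x = complex_of_real (D N / K N) * Afun N x + complex_of_real (V N / K N) * Wfun N x
     + complex_of_real (V N / K N - 1) * g x + complex_of_real (1 / K N) * Efun N x"
proof -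
  define Sv where "Sv = (\<Sum>n=1..N. complex_of_real (v n) * f n x)"
  define Ss where "Ss = (\<Sum>n=1..N. complex_of_real (s n) * f n x)"
  define Se where "Se = (\<Sum>n=1..N. complex_of_real (err n) * f n x)"
  have "Nh h \<inter> {1..N} = {1..N} \<inter> Nh h" by auto
  then have "(\<Sum>n\<in>Nh h \<inter> {1..N}. f n x) = (\<Sum>n=1..N. complex_of_real (chi n) * f n x)"
    by (simp add: sum.inter_restrict chi_def) (rule sum.cong; simp)
  also have "\<dots> = (\<Sum>n=1..N. complex_of_real (v n) * f n x + complex_of_real (s n) * f n x
       + complex_of_real (err n) * f n x)"
    by (rule sum.cong) (auto simp: err_def algebra_simps)
  also have "\<dots> = Sv + Ss + Se" by (simp add: sum.distrib Sv_def Ss_def Se_def)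
  finally have L1: "(\<Sum>n\<in>Nh h \<inter> {1..N}. f n x) = Sv + Ss + Se" .
  have A1: "Afun N x = (1 / complex_of_real (D N)) * Ss"
    unfolding Afun_def Ss_def sum_distrib_left
    by (rule sum.cong) (auto simp: s_def D_def)
  have W1: "Wfun N x = Sv / complex_of_real (V N) - g x"
    by (simp add: Wfun_def Sv_def V_def)
  have E1: "Efun N x = Se" by (simp add: Efun_def Se_def)
  have C1: "(of_nat (card (Nh h \<inter> {1..N})) :: complex) = complex_of_real (K N)"
    by (simp add: K_def)
  have "Lfun N x = (Sv + Ss + Se) / complex_of_real (K N) - g x"
    unfolding Lfun_def L1 C1 ..
  also have "\<dots> = (complex_of_real (D N) / complex_of_real (K N)) * ((1 / complex_of_real (D N)) * Ss)
      + (complex_of_real (V N) / complex_of_real (K N)) * (Sv / complex_of_real (V N) - g x)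
      + (complex_of_real (V N) / complex_of_real (K N) - 1) * g x + (1 / complex_of_real (K N)) * Se"
    by (rule alg_id) (use K0 V0 D0 in auto)
  finally show ?thesis unfolding A1 W1 E1 by simp
qed

lemma Ebound: assumes "N \<ge> m0" shows "L2norm M (Efun N) \<le> Eb"
proof -
  have "L2norm M (Efun N) \<le> (\<Sum>n=1..N. L2norm M (\<lambda>x. complex_of_real (err n) * f n x))"
    unfolding Efun_def by (intro L2_sum ballI sqi_cmult sf) simp
  also have "\<dots> = (\<Sum>n=1..N. \<bar>err n\<bar> * L2norm M (f n))"
    by (simp add: L2norm_cmult)
  also have "\<dots> \<le> (\<Sum>n=1..N. \<bar>err n\<bar>)"
    using Lf_le1 by (intro sum_mono) (simp add: mult_left_le)
  also have "\<dots> = Eb" using err_sum[OF assms] by simp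
  finally show ?thesis .
qed

lemma main_bound:
  assumes N: "N \<ge> m0" and K0: "K N > 0" and V0: "V N > 0" and D0: "D N > 0"
  shows "L2norm M (Lfun N) \<le> (D N / K N) * L2norm M (Afun N)
     + ((V N / K N) * L2norm M (Wfun N) + \<bar>V N / K N - 1\<bar> * L2norm M g + Eb / K N)"
proof -
  define T1 where "T1 x = complex_of_real (D N / K N) * Afun N x" for x
  define T2 where "T2 x = complex_of_real (V N / K N) * Wfun N x" for x
  define T3 where "T3 x = complex_of_real (V N / K N - 1) * g x" for x
  define T4 where "T4 x = complex_of_real (1 / K N) * Efun N x" for x
  have s1: "sqi M T1" "sqi M T2" "sqi M T3" "sqi M T4"
    unfolding T1_def T2_def T3_def T4_def by (intro sqi_cmult sA sW sg sE)+
  have "L2norm M (Lfun N) = L2norm M (\<lambda>x. T1 x + T2 x + T3 x + T4 x)"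
    unfolding T1_def T2_def T3_def T4_def
    by (rule L2norm_cong) (use pointwise K0 V0 D0 in auto)
  also have "\<dots> \<le> L2norm M (\<lambda>x. T1 x + T2 x + T3 x) + L2norm M T4"
    using s1 by (intro L2_triangle sqi_add) auto
  also have "L2norm M (\<lambda>x. T1 x + T2 x + T3 x) \<le> L2norm M (\<lambda>x. T1 x + T2 x) + L2norm M T3"
    using s1 by (intro L2_triangle sqi_add) auto
  also have "L2norm M (\<lambda>x. T1 x + T2 x) \<le> L2norm M T1 + L2norm M T2"
    using s1 by (intro L2_triangle) auto
  also have "L2norm M T1 = (D N / K N) * L2norm M (Afun N)"
    unfolding T1_def L2norm_cmult norm_of_real using K0 D0 by simp
  also have "L2norm M T2 = (V N / K N) * L2norm M (Wfun N)"
    unfolding T2_def L2norm_cmult norm_of_real using K0 V0 by simp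
  also have "L2norm M T3 = \<bar>V N / K N - 1\<bar> * L2norm M g"
    unfolding T3_def L2norm_cmult norm_of_real by simp
  also have "L2norm M T4 = (1 / K N) * L2norm M (Efun N)"
    unfolding T4_def L2norm_cmult norm_of_real using K0 by simp
  also have "(1 / K N) * L2norm M (Efun N) \<le> Eb / K N"
    using Ebound[OF N] K0 by (simp add: divide_right_mono)
  finally show ?thesis by simp
qed

end


theorem proposition2p1:
  fixes c x0 :: real and h \<phi> :: "real \<Rightarrow> real"
    and M :: "'a measure" and f :: "nat \<Rightarrow> 'a \<Rightarrow> complex" and g :: "'a \<Rightarrow> complex"
  assumes hR: "regvar c x0 h"
    and phi_inv: "\<forall>y\<ge>h x0. x0 \<le> \<phi> y \<and> h (\<phi> y) = y"
    and M: "prob_space M"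
    and f_meas: "\<forall>n. f n \<in> borel_measurable M"
    and f_bdd: "\<forall>n. \<forall>x\<in>space M. cmod (f n x) \<le> 1"
    and g_meas: "g \<in> borel_measurable M"
    and g_L2: "integrable M (\<lambda>x. (cmod (g x))^2)"
    and conv: "(\<lambda>N. L2norm M (\<lambda>x. (\<Sum>n=1..N. f n x) / of_nat N - g x)) \<longlonglongrightarrow> 0"
  shows "limsup (\<lambda>N. ereal (L2norm M (\<lambda>x.
             (\<Sum>n\<in>Nh h \<inter> {1..N}. f n x) / of_nat (card (Nh h \<inter> {1..N})) - g x)))
         \<le> limsup (\<lambda>N. ereal (L2norm M (\<lambda>x.
             \<Sum>n=1..N. complex_of_real
               ((sawtooth (- \<phi> (real n + 1)) - sawtooth (- \<phi> (real n)))
                  / of_int \<lfloor>\<phi> (real N)\<rfloor>) * f n x)))"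
proof -
  interpret P: P21 c x0 h \<phi> using hR phi_inv by unfold_locales
  obtain m0 :: nat where m0: "1 \<le> m0" "h x0 \<le> real m0" "\<forall>m\<ge>m0. P.w m \<le> 1"
      "\<forall>m\<ge>m0. (if m \<in> Nh h then 1 else 0) = P.w m + P.s m"
    using P.exists_m0 by blast
  interpret Q: P21b c x0 h \<phi> M f g m0
  proof (rule P21b.intro)
    show "P21 c x0 h \<phi>" using hR phi_inv by unfold_locales
    show "P21b_axioms x0 h \<phi> M f g m0"
      by (rule P21b_axioms.intro) (rule M f_meas f_bdd g_meas g_L2 conv m0(1) m0(2) m0(3) m0(4))+
  qed
  have evV: "eventually (\<lambda>N. Q.V N > 0) sequentially"
    using Q.Vinf by (simp add: filterlim_at_top_dense)
  have evK: "eventually (\<lambda>N. Q.K N > 0) sequentially"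
    using Q.Kinf by (simp add: filterlim_at_top_dense)
  have evD: "eventually (\<lambda>N. Q.D N > 0) sequentially"
  proof -
    have "eventually (\<lambda>N. \<phi> (real N) \<ge> 1) sequentially"
      using P.phi_tendsto by (simp add: filterlim_at_top)
    then show ?thesis by eventually_elim (simp add: Q.D_def)
  qed
  have a: "(\<lambda>N. Q.D N / Q.K N) \<longlonglongrightarrow> 1"
  proof -
    have "(\<lambda>N. (Q.D N / Q.V N) / (Q.K N / Q.V N)) \<longlonglongrightarrow> 1 / 1"
      by (intro tendsto_divide Q.DV1 Q.KV1) simp
    moreover have "eventually (\<lambda>N. (Q.D N / Q.V N) / (Q.K N / Q.V N) = Q.D N / Q.K N) sequentially"
      using evV by eventually_elim simp
    ultimately show ?thesis by (simp add: Lim_transform_eventually)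
  qed
  have VK: "(\<lambda>N. Q.V N / Q.K N) \<longlonglongrightarrow> 1"
  proof -
    have "(\<lambda>N. 1 / (Q.K N / Q.V N)) \<longlonglongrightarrow> 1 / 1"
      by (intro tendsto_divide Q.KV1 tendsto_const) simp
    moreover have "eventually (\<lambda>N. 1 / (Q.K N / Q.V N) = Q.V N / Q.K N) sequentially"
      by (rule always_eventually) simp
    ultimately show ?thesis by (simp add: Lim_transform_eventually)
  qed
  have Veq: "Q.V = (\<lambda>N. \<Sum>n=1..N. Q.v n)" by (rule ext) (simp add: Q.V_def)
  have W: "(\<lambda>N. L2norm M (Q.Wfun N)) \<longlonglongrightarrow> 0"
    unfolding Q.Wfun_def
    by (rule weighted_L2[OF M f_meas f_bdd g_meas g_L2 conv Q.v_dec])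
       (use Q.v_nn Q.Vinf[unfolded Veq] in auto)
  have EK: "(\<lambda>N. Q.Eb / Q.K N) \<longlonglongrightarrow> 0"
    by (rule tendsto_divide_0[OF tendsto_const filterlim_at_top_imp_at_infinity[OF Q.Kinf]])
  have e: "(\<lambda>N. (Q.V N / Q.K N) * L2norm M (Q.Wfun N) + \<bar>Q.V N / Q.K N - 1\<bar> * L2norm M g + Q.Eb / Q.K N)
      \<longlonglongrightarrow> 1 * 0 + \<bar>1 - 1\<bar> * L2norm M g + 0"
    by (intro tendsto_add tendsto_mult tendsto_rabs tendsto_diff VK W EK tendsto_const)
  have ev: "eventually (\<lambda>N. L2norm M (Q.Lfun N) \<le> (Q.D N / Q.K N) * L2norm M (Q.Afun N)
     + ((Q.V N / Q.K N) * L2norm M (Q.Wfun N) + \<bar>Q.V N / Q.K N - 1\<bar> * L2norm M g + Q.Eb / Q.K N)) sequentially"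
    using eventually_ge_at_top[of m0] evK evV evD
  proof eventually_elim
    case (elim N) then show ?case by (intro Q.main_bound)
  qed
  have "limsup (\<lambda>N. ereal (L2norm M (Q.Lfun N))) \<le> limsup (\<lambda>N. ereal (L2norm M (Q.Afun N)))"
  proof (rule final_limsup[OF a _ ev])
    show "(\<lambda>N. (Q.V N / Q.K N) * L2norm M (Q.Wfun N) + \<bar>Q.V N / Q.K N - 1\<bar> * L2norm M g + Q.Eb / Q.K N) \<longlonglongrightarrow> 0"
      using e by simp
    show "\<forall>N. 0 \<le> L2norm M (Q.Afun N)" by (simp add: L2norm_nonneg)
  qed
  then show ?thesis unfolding Q.Lfun_def Q.Afun_def .
qed


end
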